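(* For every real number $\theta\in(0,1/4]\cup(3/11,2/7]$ there exists a finite simple graph $G$ such that $P^{J(\theta)}(G)\neq G$ and $P^{J(\theta)}\big(P^{J(\theta)}(G)\big)=G$.
   Context: All graphs are finite and simple. For a vertex $v$ of a graph $G$, $N[v]$ denotes its closed neighbourhood in $G$ (the set of neighbours of $v$ together with $v$). The Jaccard similarity of vertices $u,v$ in $G$ is $J_G(u,v)=|N[u]\cap N[v]|/|N[u]\cup N[v]|$. For a real threshold $\theta$, $P^{J(\theta)}(G)$ (the $\theta$-Jaccard polishing of $G$) is the graph on the same vertex set as $G$ in which two distinct vertices $u,v$ are adjacent if and only if $J_G(u,v)\ge\theta$. Equality of graphs means equality of edge sets on the same vertex set. *)

theory Defs
  imports Complex_Main
begin

definition simple_graph :: "'a set \<Rightarrow> 'a set set \<Rightarrow> bool" where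
  "simple_graph V E \<longleftrightarrow> finite V \<and> (\<forall>e\<in>E. \<exists>u v. u \<in> V \<and> v \<in> V \<and> u \<noteq> v \<and> e = {u, v})"

definition closed_nbhd :: "'a set \<Rightarrow> 'a set set \<Rightarrow> 'a \<Rightarrow> 'a set" where
  "closed_nbhd V E v = insert v {u \<in> V. {u, v} \<in> E}"

definition jaccard :: "'a set \<Rightarrow> 'a set set \<Rightarrow> 'a \<Rightarrow> 'a \<Rightarrow> real" where
  "jaccard V E u v =
     real (card (closed_nbhd V E u \<inter> closed_nbhd V E v)) /
     real (card (closed_nbhd V E u \<union> closed_nbhd V E v))"

definition jaccard_polish :: "real \<Rightarrow> 'a set \<Rightarrow> 'a set set \<Rightarrow> 'a set set" where
  "jaccard_polish \<theta> V E =
     {{u, v} | u v. u \<in> V \<and> v \<in> V \<and> u \<noteq> v \<and> jaccard V E u v \<ge> \<theta>}"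

end

theory Submission imports Defs begin
definition wt :: "nat \<Rightarrow> nat \<Rightarrow> nat \<Rightarrow> nat \<Rightarrow> nat" where
 "wt a b d c = (if c = 0 \<or> c = 1 then 1 else if c = 2 \<or> c = 4 then a else if c = 3 then b else if c = 5 \<or> c = 6 then d else 0)"
definition nbG :: "nat \<Rightarrow> nat set" where
 "nbG c = (if c = 0 then {0,4,5} else if c = 1 then {1,2,6} else if c = 2 then {1,2,3,4,5}
   else if c = 3 then {2,3,4} else if c = 4 then {0,2,3,4,6} else if c = 5 then {0,2,5} else if c = 6 then {1,4,6} else {})"
definition nbH :: "nat \<Rightarrow> nat set" where
 "nbH c = (if c = 0 then {0,2,6} else if c = 1 then {1,4,5} else if c = 2 then {0,2,3,4,5}
   else if c = 3 then {2,3,4} else if c = 4 then {1,2,3,4,6} else if c = 5 then {1,2,5} else if c = 6 then {0,4,6} else {})"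
definition JJ :: "(nat \<Rightarrow> nat) \<Rightarrow> (nat \<Rightarrow> nat set) \<Rightarrow> nat \<Rightarrow> nat \<Rightarrow> real" where
 "JJ w nb i j = real (sum w (nb i \<inter> nb j)) / real (sum w (nb i \<union> nb j))"

lemma seven: "{..<7::nat} = {0,1,2,3,4,5,6}" by auto

definition pv0 :: "nat \<Rightarrow> nat \<Rightarrow> nat \<Rightarrow> real" where "pv0 a b d = real (0) / real (2 + 2*a + 2*d)"
definition pv1 :: "nat \<Rightarrow> nat \<Rightarrow> nat \<Rightarrow> real" where "pv1 a b d = real (a + d) / real (2 + 2*a + b + d)"
definition pv2 :: "nat \<Rightarrow> nat \<Rightarrow> nat \<Rightarrow> real" where "pv2 a b d = real (a) / real (1 + 2*a + b + d)"
definition pv3 :: "nat \<Rightarrow> nat \<Rightarrow> nat \<Rightarrow> real" where "pv3 a b d = real (1 + a) / real (1 + 2*a + b + 2*d)"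
definition pv4 :: "nat \<Rightarrow> nat \<Rightarrow> nat \<Rightarrow> real" where "pv4 a b d = real (1 + d) / real (1 + 2*a + d)"
definition pv5 :: "nat \<Rightarrow> nat \<Rightarrow> nat \<Rightarrow> real" where "pv5 a b d = real (a) / real (2 + a + 2*d)"
definition pv6 :: "nat \<Rightarrow> nat \<Rightarrow> nat \<Rightarrow> real" where "pv6 a b d = real (2*a + b) / real (1 + 2*a + b + d)"
definition pv7 :: "nat \<Rightarrow> nat \<Rightarrow> nat \<Rightarrow> real" where "pv7 a b d = real (2*a + b) / real (2 + 2*a + b + 2*d)"
named_theorems Jsimps
lemma J_nbG_0_1[Jsimps]: "JJ (wt a b d) nbG 0 (Suc 0) = pv0 a b d"
  unfolding JJ_def nbG_def pv0_def by (simp add: wt_def insert_commute)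
lemma J_nbG_0_2[Jsimps]: "JJ (wt a b d) nbG 0 2 = pv1 a b d"
  unfolding JJ_def nbG_def pv1_def by (simp add: wt_def insert_commute)
lemma J_nbG_0_3[Jsimps]: "JJ (wt a b d) nbG 0 3 = pv2 a b d"
  unfolding JJ_def nbG_def pv2_def by (simp add: wt_def insert_commute)
lemma J_nbG_0_4[Jsimps]: "JJ (wt a b d) nbG 0 4 = pv3 a b d"
  unfolding JJ_def nbG_def pv3_def by (simp add: wt_def insert_commute)
lemma J_nbG_0_5[Jsimps]: "JJ (wt a b d) nbG 0 5 = pv4 a b d"
  unfolding JJ_def nbG_def pv4_def by (simp add: wt_def insert_commute)
lemma J_nbG_0_6[Jsimps]: "JJ (wt a b d) nbG 0 6 = pv5 a b d"
  unfolding JJ_def nbG_def pv5_def by (simp add: wt_def insert_commute)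
lemma J_nbG_1_0[Jsimps]: "JJ (wt a b d) nbG (Suc 0) 0 = pv0 a b d"
  unfolding JJ_def nbG_def pv0_def by (simp add: wt_def insert_commute)
lemma J_nbG_1_2[Jsimps]: "JJ (wt a b d) nbG (Suc 0) 2 = pv3 a b d"
  unfolding JJ_def nbG_def pv3_def by (simp add: wt_def insert_commute)
lemma J_nbG_1_3[Jsimps]: "JJ (wt a b d) nbG (Suc 0) 3 = pv2 a b d"
  unfolding JJ_def nbG_def pv2_def by (simp add: wt_def insert_commute)
lemma J_nbG_1_4[Jsimps]: "JJ (wt a b d) nbG (Suc 0) 4 = pv1 a b d"
  unfolding JJ_def nbG_def pv1_def by (simp add: wt_def insert_commute)
lemma J_nbG_1_5[Jsimps]: "JJ (wt a b d) nbG (Suc 0) 5 = pv5 a b d"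
  unfolding JJ_def nbG_def pv5_def by (simp add: wt_def insert_commute)
lemma J_nbG_1_6[Jsimps]: "JJ (wt a b d) nbG (Suc 0) 6 = pv4 a b d"
  unfolding JJ_def nbG_def pv4_def by (simp add: wt_def insert_commute)
lemma J_nbG_2_0[Jsimps]: "JJ (wt a b d) nbG 2 0 = pv1 a b d"
  unfolding JJ_def nbG_def pv1_def by (simp add: wt_def insert_commute)
lemma J_nbG_2_1[Jsimps]: "JJ (wt a b d) nbG 2 (Suc 0) = pv3 a b d"
  unfolding JJ_def nbG_def pv3_def by (simp add: wt_def insert_commute)
lemma J_nbG_2_3[Jsimps]: "JJ (wt a b d) nbG 2 3 = pv6 a b d"
  unfolding JJ_def nbG_def pv6_def by (simp add: wt_def insert_commute)
lemma J_nbG_2_4[Jsimps]: "JJ (wt a b d) nbG 2 4 = pv7 a b d"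
  unfolding JJ_def nbG_def pv7_def by (simp add: wt_def insert_commute)
lemma J_nbG_2_5[Jsimps]: "JJ (wt a b d) nbG 2 5 = pv1 a b d"
  unfolding JJ_def nbG_def pv1_def by (simp add: wt_def insert_commute)
lemma J_nbG_2_6[Jsimps]: "JJ (wt a b d) nbG 2 6 = pv3 a b d"
  unfolding JJ_def nbG_def pv3_def by (simp add: wt_def insert_commute)
lemma J_nbG_3_0[Jsimps]: "JJ (wt a b d) nbG 3 0 = pv2 a b d"
  unfolding JJ_def nbG_def pv2_def by (simp add: wt_def insert_commute)
lemma J_nbG_3_1[Jsimps]: "JJ (wt a b d) nbG 3 (Suc 0) = pv2 a b d"
  unfolding JJ_def nbG_def pv2_def by (simp add: wt_def insert_commute)
lemma J_nbG_3_2[Jsimps]: "JJ (wt a b d) nbG 3 2 = pv6 a b d"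
  unfolding JJ_def nbG_def pv6_def by (simp add: wt_def insert_commute)
lemma J_nbG_3_4[Jsimps]: "JJ (wt a b d) nbG 3 4 = pv6 a b d"
  unfolding JJ_def nbG_def pv6_def by (simp add: wt_def insert_commute)
lemma J_nbG_3_5[Jsimps]: "JJ (wt a b d) nbG 3 5 = pv2 a b d"
  unfolding JJ_def nbG_def pv2_def by (simp add: wt_def insert_commute)
lemma J_nbG_3_6[Jsimps]: "JJ (wt a b d) nbG 3 6 = pv2 a b d"
  unfolding JJ_def nbG_def pv2_def by (simp add: wt_def insert_commute)
lemma J_nbG_4_0[Jsimps]: "JJ (wt a b d) nbG 4 0 = pv3 a b d"
  unfolding JJ_def nbG_def pv3_def by (simp add: wt_def insert_commute)
lemma J_nbG_4_1[Jsimps]: "JJ (wt a b d) nbG 4 (Suc 0) = pv1 a b d"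
  unfolding JJ_def nbG_def pv1_def by (simp add: wt_def insert_commute)
lemma J_nbG_4_2[Jsimps]: "JJ (wt a b d) nbG 4 2 = pv7 a b d"
  unfolding JJ_def nbG_def pv7_def by (simp add: wt_def insert_commute)
lemma J_nbG_4_3[Jsimps]: "JJ (wt a b d) nbG 4 3 = pv6 a b d"
  unfolding JJ_def nbG_def pv6_def by (simp add: wt_def insert_commute)
lemma J_nbG_4_5[Jsimps]: "JJ (wt a b d) nbG 4 5 = pv3 a b d"
  unfolding JJ_def nbG_def pv3_def by (simp add: wt_def insert_commute)
lemma J_nbG_4_6[Jsimps]: "JJ (wt a b d) nbG 4 6 = pv1 a b d"
  unfolding JJ_def nbG_def pv1_def by (simp add: wt_def insert_commute)
lemma J_nbG_5_0[Jsimps]: "JJ (wt a b d) nbG 5 0 = pv4 a b d"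
  unfolding JJ_def nbG_def pv4_def by (simp add: wt_def insert_commute)
lemma J_nbG_5_1[Jsimps]: "JJ (wt a b d) nbG 5 (Suc 0) = pv5 a b d"
  unfolding JJ_def nbG_def pv5_def by (simp add: wt_def insert_commute)
lemma J_nbG_5_2[Jsimps]: "JJ (wt a b d) nbG 5 2 = pv1 a b d"
  unfolding JJ_def nbG_def pv1_def by (simp add: wt_def insert_commute)
lemma J_nbG_5_3[Jsimps]: "JJ (wt a b d) nbG 5 3 = pv2 a b d"
  unfolding JJ_def nbG_def pv2_def by (simp add: wt_def insert_commute)
lemma J_nbG_5_4[Jsimps]: "JJ (wt a b d) nbG 5 4 = pv3 a b d"
  unfolding JJ_def nbG_def pv3_def by (simp add: wt_def insert_commute)
lemma J_nbG_5_6[Jsimps]: "JJ (wt a b d) nbG 5 6 = pv0 a b d"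
  unfolding JJ_def nbG_def pv0_def by (simp add: wt_def insert_commute)
lemma J_nbG_6_0[Jsimps]: "JJ (wt a b d) nbG 6 0 = pv5 a b d"
  unfolding JJ_def nbG_def pv5_def by (simp add: wt_def insert_commute)
lemma J_nbG_6_1[Jsimps]: "JJ (wt a b d) nbG 6 (Suc 0) = pv4 a b d"
  unfolding JJ_def nbG_def pv4_def by (simp add: wt_def insert_commute)
lemma J_nbG_6_2[Jsimps]: "JJ (wt a b d) nbG 6 2 = pv3 a b d"
  unfolding JJ_def nbG_def pv3_def by (simp add: wt_def insert_commute)
lemma J_nbG_6_3[Jsimps]: "JJ (wt a b d) nbG 6 3 = pv2 a b d"
  unfolding JJ_def nbG_def pv2_def by (simp add: wt_def insert_commute)
lemma J_nbG_6_4[Jsimps]: "JJ (wt a b d) nbG 6 4 = pv1 a b d"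
  unfolding JJ_def nbG_def pv1_def by (simp add: wt_def insert_commute)
lemma J_nbG_6_5[Jsimps]: "JJ (wt a b d) nbG 6 5 = pv0 a b d"
  unfolding JJ_def nbG_def pv0_def by (simp add: wt_def insert_commute)
lemma J_nbH_0_1[Jsimps]: "JJ (wt a b d) nbH 0 (Suc 0) = pv0 a b d"
  unfolding JJ_def nbH_def pv0_def by (simp add: wt_def insert_commute)
lemma J_nbH_0_2[Jsimps]: "JJ (wt a b d) nbH 0 2 = pv3 a b d"
  unfolding JJ_def nbH_def pv3_def by (simp add: wt_def insert_commute)
lemma J_nbH_0_3[Jsimps]: "JJ (wt a b d) nbH 0 3 = pv2 a b d"
  unfolding JJ_def nbH_def pv2_def by (simp add: wt_def insert_commute)
lemma J_nbH_0_4[Jsimps]: "JJ (wt a b d) nbH 0 4 = pv1 a b d"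
  unfolding JJ_def nbH_def pv1_def by (simp add: wt_def insert_commute)
lemma J_nbH_0_5[Jsimps]: "JJ (wt a b d) nbH 0 5 = pv5 a b d"
  unfolding JJ_def nbH_def pv5_def by (simp add: wt_def insert_commute)
lemma J_nbH_0_6[Jsimps]: "JJ (wt a b d) nbH 0 6 = pv4 a b d"
  unfolding JJ_def nbH_def pv4_def by (simp add: wt_def insert_commute)
lemma J_nbH_1_0[Jsimps]: "JJ (wt a b d) nbH (Suc 0) 0 = pv0 a b d"
  unfolding JJ_def nbH_def pv0_def by (simp add: wt_def insert_commute)
lemma J_nbH_1_2[Jsimps]: "JJ (wt a b d) nbH (Suc 0) 2 = pv1 a b d"
  unfolding JJ_def nbH_def pv1_def by (simp add: wt_def insert_commute)
lemma J_nbH_1_3[Jsimps]: "JJ (wt a b d) nbH (Suc 0) 3 = pv2 a b d"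
  unfolding JJ_def nbH_def pv2_def by (simp add: wt_def insert_commute)
lemma J_nbH_1_4[Jsimps]: "JJ (wt a b d) nbH (Suc 0) 4 = pv3 a b d"
  unfolding JJ_def nbH_def pv3_def by (simp add: wt_def insert_commute)
lemma J_nbH_1_5[Jsimps]: "JJ (wt a b d) nbH (Suc 0) 5 = pv4 a b d"
  unfolding JJ_def nbH_def pv4_def by (simp add: wt_def insert_commute)
lemma J_nbH_1_6[Jsimps]: "JJ (wt a b d) nbH (Suc 0) 6 = pv5 a b d"
  unfolding JJ_def nbH_def pv5_def by (simp add: wt_def insert_commute)
lemma J_nbH_2_0[Jsimps]: "JJ (wt a b d) nbH 2 0 = pv3 a b d"
  unfolding JJ_def nbH_def pv3_def by (simp add: wt_def insert_commute)
lemma J_nbH_2_1[Jsimps]: "JJ (wt a b d) nbH 2 (Suc 0) = pv1 a b d"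
  unfolding JJ_def nbH_def pv1_def by (simp add: wt_def insert_commute)
lemma J_nbH_2_3[Jsimps]: "JJ (wt a b d) nbH 2 3 = pv6 a b d"
  unfolding JJ_def nbH_def pv6_def by (simp add: wt_def insert_commute)
lemma J_nbH_2_4[Jsimps]: "JJ (wt a b d) nbH 2 4 = pv7 a b d"
  unfolding JJ_def nbH_def pv7_def by (simp add: wt_def insert_commute)
lemma J_nbH_2_5[Jsimps]: "JJ (wt a b d) nbH 2 5 = pv1 a b d"
  unfolding JJ_def nbH_def pv1_def by (simp add: wt_def insert_commute)
lemma J_nbH_2_6[Jsimps]: "JJ (wt a b d) nbH 2 6 = pv3 a b d"
  unfolding JJ_def nbH_def pv3_def by (simp add: wt_def insert_commute)
lemma J_nbH_3_0[Jsimps]: "JJ (wt a b d) nbH 3 0 = pv2 a b d"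
  unfolding JJ_def nbH_def pv2_def by (simp add: wt_def insert_commute)
lemma J_nbH_3_1[Jsimps]: "JJ (wt a b d) nbH 3 (Suc 0) = pv2 a b d"
  unfolding JJ_def nbH_def pv2_def by (simp add: wt_def insert_commute)
lemma J_nbH_3_2[Jsimps]: "JJ (wt a b d) nbH 3 2 = pv6 a b d"
  unfolding JJ_def nbH_def pv6_def by (simp add: wt_def insert_commute)
lemma J_nbH_3_4[Jsimps]: "JJ (wt a b d) nbH 3 4 = pv6 a b d"
  unfolding JJ_def nbH_def pv6_def by (simp add: wt_def insert_commute)
lemma J_nbH_3_5[Jsimps]: "JJ (wt a b d) nbH 3 5 = pv2 a b d"
  unfolding JJ_def nbH_def pv2_def by (simp add: wt_def insert_commute)
lemma J_nbH_3_6[Jsimps]: "JJ (wt a b d) nbH 3 6 = pv2 a b d"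
  unfolding JJ_def nbH_def pv2_def by (simp add: wt_def insert_commute)
lemma J_nbH_4_0[Jsimps]: "JJ (wt a b d) nbH 4 0 = pv1 a b d"
  unfolding JJ_def nbH_def pv1_def by (simp add: wt_def insert_commute)
lemma J_nbH_4_1[Jsimps]: "JJ (wt a b d) nbH 4 (Suc 0) = pv3 a b d"
  unfolding JJ_def nbH_def pv3_def by (simp add: wt_def insert_commute)
lemma J_nbH_4_2[Jsimps]: "JJ (wt a b d) nbH 4 2 = pv7 a b d"
  unfolding JJ_def nbH_def pv7_def by (simp add: wt_def insert_commute)
lemma J_nbH_4_3[Jsimps]: "JJ (wt a b d) nbH 4 3 = pv6 a b d"
  unfolding JJ_def nbH_def pv6_def by (simp add: wt_def insert_commute)
lemma J_nbH_4_5[Jsimps]: "JJ (wt a b d) nbH 4 5 = pv3 a b d"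
  unfolding JJ_def nbH_def pv3_def by (simp add: wt_def insert_commute)
lemma J_nbH_4_6[Jsimps]: "JJ (wt a b d) nbH 4 6 = pv1 a b d"
  unfolding JJ_def nbH_def pv1_def by (simp add: wt_def insert_commute)
lemma J_nbH_5_0[Jsimps]: "JJ (wt a b d) nbH 5 0 = pv5 a b d"
  unfolding JJ_def nbH_def pv5_def by (simp add: wt_def insert_commute)
lemma J_nbH_5_1[Jsimps]: "JJ (wt a b d) nbH 5 (Suc 0) = pv4 a b d"
  unfolding JJ_def nbH_def pv4_def by (simp add: wt_def insert_commute)
lemma J_nbH_5_2[Jsimps]: "JJ (wt a b d) nbH 5 2 = pv1 a b d"
  unfolding JJ_def nbH_def pv1_def by (simp add: wt_def insert_commute)
lemma J_nbH_5_3[Jsimps]: "JJ (wt a b d) nbH 5 3 = pv2 a b d"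
  unfolding JJ_def nbH_def pv2_def by (simp add: wt_def insert_commute)
lemma J_nbH_5_4[Jsimps]: "JJ (wt a b d) nbH 5 4 = pv3 a b d"
  unfolding JJ_def nbH_def pv3_def by (simp add: wt_def insert_commute)
lemma J_nbH_5_6[Jsimps]: "JJ (wt a b d) nbH 5 6 = pv0 a b d"
  unfolding JJ_def nbH_def pv0_def by (simp add: wt_def insert_commute)
lemma J_nbH_6_0[Jsimps]: "JJ (wt a b d) nbH 6 0 = pv4 a b d"
  unfolding JJ_def nbH_def pv4_def by (simp add: wt_def insert_commute)
lemma J_nbH_6_1[Jsimps]: "JJ (wt a b d) nbH 6 (Suc 0) = pv5 a b d"
  unfolding JJ_def nbH_def pv5_def by (simp add: wt_def insert_commute)
lemma J_nbH_6_2[Jsimps]: "JJ (wt a b d) nbH 6 2 = pv3 a b d"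
  unfolding JJ_def nbH_def pv3_def by (simp add: wt_def insert_commute)
lemma J_nbH_6_3[Jsimps]: "JJ (wt a b d) nbH 6 3 = pv2 a b d"
  unfolding JJ_def nbH_def pv2_def by (simp add: wt_def insert_commute)
lemma J_nbH_6_4[Jsimps]: "JJ (wt a b d) nbH 6 4 = pv1 a b d"
  unfolding JJ_def nbH_def pv1_def by (simp add: wt_def insert_commute)
lemma J_nbH_6_5[Jsimps]: "JJ (wt a b d) nbH 6 5 = pv0 a b d"
  unfolding JJ_def nbH_def pv0_def by (simp add: wt_def insert_commute)

lemma all7: "(\<forall>i<(7::nat). P i) = (P 0 \<and> P 1 \<and> P 2 \<and> P 3 \<and> P 4 \<and> P 5 \<and> P 6)"
proof
  assume "P 0 \<and> P 1 \<and> P 2 \<and> P 3 \<and> P 4 \<and> P 5 \<and> P 6"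
  moreover have "i < 7 \<Longrightarrow> i = 0 \<or> i = 1 \<or> i = 2 \<or> i = 3 \<or> i = 4 \<or> i = 5 \<or> i = 6" for i::nat by auto
  ultimately show "\<forall>i<7. P i" by auto
qed auto

lemma pairs_ok:
  fixes a b d :: nat and \<theta> :: real
  assumes "\<not> \<theta> \<le> pv0 a b d" "\<theta> \<le> pv1 a b d" "\<not> \<theta> \<le> pv2 a b d" "\<not> \<theta> \<le> pv3 a b d"
    "\<not> \<theta> \<le> pv4 a b d" "\<theta> \<le> pv5 a b d" "\<theta> \<le> pv6 a b d" "\<theta> \<le> pv7 a b d"
  shows "\<forall>i<7. \<forall>j<7. i \<noteq> j \<longrightarrow> (\<theta> \<le> JJ (wt a b d) nbG i j \<longleftrightarrow> j \<in> nbH i)"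
    and "\<forall>i<7. \<forall>j<7. i \<noteq> j \<longrightarrow> (\<theta> \<le> JJ (wt a b d) nbH i j \<longleftrightarrow> j \<in> nbG i)"
  unfolding all7 using assms by (simp_all add: Jsimps nbG_def nbH_def)

definition good :: "(nat \<Rightarrow> nat set) \<Rightarrow> bool" where
  "good nb \<longleftrightarrow> (\<forall>i<7. i \<in> nb i \<and> nb i \<subseteq> {..<7}) \<and> (\<forall>i<7. \<forall>j<7. j \<in> nb i \<longleftrightarrow> i \<in> nb j)"

definition VV :: "(nat \<Rightarrow> nat) \<Rightarrow> nat set" where
  "VV w = {v. v div 7 < w (v mod 7)}"

definition EB :: "(nat \<Rightarrow> nat) \<Rightarrow> (nat \<Rightarrow> nat set) \<Rightarrow> nat set set" where
  "EB w nb = {{u, v} | u v. u \<in> VV w \<and> v \<in> VV w \<and> u \<noteq> v \<and> v mod 7 \<in> nb (u mod 7)}"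

lemma VV_sub_img:
  "{x \<in> VV w. x mod 7 \<in> S} = (\<lambda>(c, i). 7 * i + c) ` (SIGMA c:S \<inter> {..<7}. {..<w c})"
proof (intro equalityI subsetI)
  fix x assume x: "x \<in> {x \<in> VV w. x mod 7 \<in> S}"
  have "x = 7 * (x div 7) + x mod 7" by simp
  moreover have "(x mod 7, x div 7) \<in> (SIGMA c:S \<inter> {..<7}. {..<w c})"
    using x by (auto simp: VV_def)
  ultimately show "x \<in> (\<lambda>(c, i). 7 * i + c) ` (SIGMA c:S \<inter> {..<7}. {..<w c})"
    by (metis (no_types, lifting) case_prod_conv image_eqI)
next
  fix x assume "x \<in> (\<lambda>(c, i). 7 * i + c) ` (SIGMA c:S \<inter> {..<7}. {..<w c})"
  then obtain c i where ci: "x = 7 * i + c" "c \<in> S" "c < 7" "i < w c" by auto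
  then have "x mod 7 = c" "x div 7 = i" by auto
  then show "x \<in> {x \<in> VV w. x mod 7 \<in> S}" using ci by (auto simp: VV_def)
qed

lemma inj_enc: "inj_on (\<lambda>(c, i). 7 * i + (c::nat)) (SIGMA c:S \<inter> {..<7}. {..<w c})"
proof (rule inj_onI)
  fix p q assume p: "p \<in> (SIGMA c:S \<inter> {..<7}. {..<w c})" and q: "q \<in> (SIGMA c:S \<inter> {..<7}. {..<w c})"
    and e: "(\<lambda>(c, i). 7 * i + (c::nat)) p = (\<lambda>(c, i). 7 * i + c) q"
  obtain c i where pc: "p = (c, i)" "c < 7" using p by auto
  obtain c' i' where qc: "q = (c', i')" "c' < 7" using q by auto
  have "7 * i + c = 7 * i' + c'" using e pc qc by simp
  then have "(7 * i + c) mod 7 = (7 * i' + c') mod 7" "(7 * i + c) div 7 = (7 * i' + c') div 7" by simp_all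
  then have "c = c'" "i = i'" using pc qc by auto
  then show "p = q" using pc qc by simp
qed

lemma card_cls: "card {x \<in> VV w. x mod 7 \<in> S} = sum w (S \<inter> {..<7})"
proof -
  have "card {x \<in> VV w. x mod 7 \<in> S} = card (SIGMA c:S \<inter> {..<7}. {..<w c})"
    unfolding VV_sub_img by (rule card_image[OF inj_enc])
  also have "\<dots> = sum w (S \<inter> {..<7})" by (simp add: card_SigmaI)
  finally show ?thesis .
qed

lemma fin_VV: "finite (VV w)"
proof -
  have "VV w = {x \<in> VV w. x mod 7 \<in> UNIV}" by simp
  also have "\<dots> = (\<lambda>(c, i). 7 * i + c) ` (SIGMA c:UNIV \<inter> {..<7}. {..<w c})" by (rule VV_sub_img)
  finally show ?thesis by simp
qed

lemma nbhd_EB: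
  assumes g: "good nb" and u: "u \<in> VV w"
  shows "closed_nbhd (VV w) (EB w nb) u = {x \<in> VV w. x mod 7 \<in> nb (u mod 7)}"
proof -
  have sym: "j \<in> nb i \<longleftrightarrow> i \<in> nb j" if "i < 7" "j < 7" for i j using g that unfolding good_def by blast
  have refl: "u mod 7 \<in> nb (u mod 7)" using g unfolding good_def by simp
  have edge: "{x, u} \<in> EB w nb \<longleftrightarrow> x \<in> VV w \<and> x \<noteq> u \<and> x mod 7 \<in> nb (u mod 7)" for x
  proof
    assume "{x, u} \<in> EB w nb"
    then obtain p q where pq: "{x, u} = {p, q}" "p \<in> VV w" "q \<in> VV w" "p \<noteq> q" "q mod 7 \<in> nb (p mod 7)"
      unfolding EB_def by blast
    from pq(1) have "(x = p \<and> u = q) \<or> (x = q \<and> u = p)" by (auto simp: doubleton_eq_iff)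
    then show "x \<in> VV w \<and> x \<noteq> u \<and> x mod 7 \<in> nb (u mod 7)"
      using pq sym[of "p mod 7" "q mod 7"] by auto
  next
    assume "x \<in> VV w \<and> x \<noteq> u \<and> x mod 7 \<in> nb (u mod 7)"
    then have "{x, u} = {u, x} \<and> u \<in> VV w \<and> x \<in> VV w \<and> u \<noteq> x \<and> x mod 7 \<in> nb (u mod 7)" using u by auto
    then show "{x, u} \<in> EB w nb" unfolding EB_def by blast
  qed
  show ?thesis unfolding closed_nbhd_def using edge u refl by auto
qed

lemma jac_EB:
  assumes g: "good nb" and u: "u \<in> VV w" and v: "v \<in> VV w"
  shows "jaccard (VV w) (EB w nb) u v = JJ w nb (u mod 7) (v mod 7)"
proof -
  have s1: "nb (u mod 7) \<subseteq> {..<7}" "nb (v mod 7) \<subseteq> {..<7}" using g unfolding good_def by auto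
  have i: "closed_nbhd (VV w) (EB w nb) u \<inter> closed_nbhd (VV w) (EB w nb) v
      = {x \<in> VV w. x mod 7 \<in> nb (u mod 7) \<inter> nb (v mod 7)}"
    using nbhd_EB[OF g u] nbhd_EB[OF g v] by auto
  have un: "closed_nbhd (VV w) (EB w nb) u \<union> closed_nbhd (VV w) (EB w nb) v
      = {x \<in> VV w. x mod 7 \<in> nb (u mod 7) \<union> nb (v mod 7)}"
    using nbhd_EB[OF g u] nbhd_EB[OF g v] by auto
  have a: "(nb (u mod 7) \<inter> nb (v mod 7)) \<inter> {..<7} = nb (u mod 7) \<inter> nb (v mod 7)" using s1 by auto
  have b: "(nb (u mod 7) \<union> nb (v mod 7)) \<inter> {..<7} = nb (u mod 7) \<union> nb (v mod 7)" using s1 by auto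
  show ?thesis unfolding jaccard_def JJ_def i un card_cls a b ..
qed

lemma polish_EB:
  assumes g: "good nb" and g': "good nb'" and wpos: "\<forall>c<7. 0 < w c" and th: "\<theta> \<le> 1"
    and pairs: "\<forall>i<7. \<forall>j<7. i \<noteq> j \<longrightarrow> (\<theta> \<le> JJ w nb i j \<longleftrightarrow> j \<in> nb' i)"
  shows "jaccard_polish \<theta> (VV w) (EB w nb) = EB w nb'"
proof -
  have key: "\<theta> \<le> jaccard (VV w) (EB w nb) u v \<longleftrightarrow> v mod 7 \<in> nb' (u mod 7)"
    if u: "u \<in> VV w" and v: "v \<in> VV w" for u v
  proof (cases "u mod 7 = v mod 7")
    case True
    let ?c = "u mod 7"
    have fin: "finite (nb ?c)" using g unfolding good_def by (meson finite_lessThan finite_subset mod_less_divisor zero_less_numeral)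
    have "?c \<in> nb ?c" using g unfolding good_def by simp
    then have "w ?c \<le> sum w (nb ?c)" using fin by (meson member_le_sum zero_le)
    then have pos: "0 < sum w (nb ?c)" using wpos by (metis gr0I le_0_eq mod_less_divisor zero_less_numeral)
    have "JJ w nb ?c ?c = 1" unfolding JJ_def using pos by (simp del: of_nat_sum)
    moreover have "v mod 7 \<in> nb' (u mod 7)" using g' True unfolding good_def by simp
    ultimately show ?thesis using jac_EB[OF g u v] True th by simp
  next
    case False
    then show ?thesis using jac_EB[OF g u v] pairs by simp
  qed
  have eqv: "\<And>u v. (u \<in> VV w \<and> v \<in> VV w \<and> u \<noteq> v \<and> \<theta> \<le> jaccard (VV w) (EB w nb) u v)
      = (u \<in> VV w \<and> v \<in> VV w \<and> u \<noteq> v \<and> v mod 7 \<in> nb' (u mod 7))"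
    using key by blast
  show ?thesis unfolding jaccard_polish_def
    unfolding eqv by (simp add: EB_def)
qed

lemma good_G: "good nbG" unfolding good_def all7 by (simp add: nbG_def)
lemma good_H: "good nbH" unfolding good_def all7 by (simp add: nbH_def)

lemma gen_main:
  fixes a b d :: nat and \<theta> :: real
  assumes pos: "0 < a" "0 < b" "0 < d" and th: "0 < \<theta>" "\<theta> \<le> 1"
    and c: "\<not> \<theta> \<le> pv0 a b d" "\<theta> \<le> pv1 a b d" "\<not> \<theta> \<le> pv2 a b d" "\<not> \<theta> \<le> pv3 a b d"
    "\<not> \<theta> \<le> pv4 a b d" "\<theta> \<le> pv5 a b d" "\<theta> \<le> pv6 a b d" "\<theta> \<le> pv7 a b d"
  shows "\<exists>(V :: nat set) E. simple_graph V E \<and>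
           jaccard_polish \<theta> V E \<noteq> E \<and>
           jaccard_polish \<theta> V (jaccard_polish \<theta> V E) = E"
proof -
  let ?w = "wt a b d"
  have wpos: "\<forall>c<7. 0 < ?w c" unfolding all7 using pos by (simp add: wt_def)
  have P1: "jaccard_polish \<theta> (VV ?w) (EB ?w nbG) = EB ?w nbH"
    by (rule polish_EB[OF good_G good_H wpos th(2) pairs_ok(1)[OF c]])
  have P2: "jaccard_polish \<theta> (VV ?w) (EB ?w nbH) = EB ?w nbG"
    by (rule polish_EB[OF good_H good_G wpos th(2) pairs_ok(2)[OF c]])
  have v0: "(0::nat) \<in> VV ?w" and v4: "(4::nat) \<in> VV ?w" using pos by (simp_all add: VV_def wt_def)
  have inG: "{0, 4} \<in> EB ?w nbG"
  proof -
    have "{0::nat, 4} = {0, 4} \<and> (0::nat) \<in> VV ?w \<and> (4::nat) \<in> VV ?w \<and> (0::nat) \<noteq> 4 \<and> (4::nat) mod 7 \<in> nbG ((0::nat) mod 7)"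
      using v0 v4 by (simp add: nbG_def)
    then show ?thesis unfolding EB_def by blast
  qed
  have notH: "{0::nat, 4} \<notin> EB ?w nbH"
  proof
    assume "{0::nat, 4} \<in> EB ?w nbH"
    then obtain p q where pq: "{0::nat, 4} = {p, q}" "q mod 7 \<in> nbH (p mod 7)" unfolding EB_def by blast
    from pq(1) have "(p = 0 \<and> q = 4) \<or> (p = 4 \<and> q = 0)" by (auto simp: doubleton_eq_iff)
    then show False using pq(2) by (auto simp: nbH_def)
  qed
  have sg: "simple_graph (VV ?w) (EB ?w nbG)"
    unfolding simple_graph_def using fin_VV unfolding EB_def by blast
  show ?thesis
    apply (rule exI[of _ "VV ?w"], rule exI[of _ "EB ?w nbG"])
    using sg P1 P2 inG notH by auto
qed

lemma caseA:
  fixes \<theta> :: real assumes "3/11 < \<theta>" "\<theta> \<le> 2/7"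
  shows "\<exists>(V :: nat set) E. simple_graph V E \<and>
           jaccard_polish \<theta> V E \<noteq> E \<and>
           jaccard_polish \<theta> V (jaccard_polish \<theta> V E) = E"
  by (rule gen_main[of 4 6 2]) (use assms in \<open>simp_all add: pv0_def pv1_def pv2_def pv3_def pv4_def pv5_def pv6_def pv7_def\<close>)

lemma caseB:
  fixes \<theta> :: real assumes th: "0 < \<theta>" "\<theta> \<le> 1/4"
  shows "\<exists>(V :: nat set) E. simple_graph V E \<and>
           jaccard_polish \<theta> V E \<noteq> E \<and>
           jaccard_polish \<theta> V (jaccard_polish \<theta> V E) = E"
proof -
  define n where "n = nat \<lfloor>1/\<theta>\<rfloor>"
  have inv4: "4 \<le> 1/\<theta>" using th by (simp add: field_simps)
  have fz: "0 \<le> \<lfloor>1/\<theta>\<rfloor>" using th by simp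
  have rn: "real n = of_int \<lfloor>1/\<theta>\<rfloor>" unfolding n_def using fz by simp
  have fl: "real n \<le> 1/\<theta>" "1/\<theta> < real n + 1" unfolding rn using floor_correct[of "1/\<theta>"] by auto
  have "4 \<le> \<lfloor>1/\<theta>\<rfloor>" using inv4 by (simp add: le_floor_iff)
  then have rn4: "(4::real) \<le> real n" unfolding rn by simp
  then have n4: "4 \<le> n" by simp
  have thn: "\<theta> \<le> 1 / real n" using fl th rn4 by (simp add: field_simps)
  have thn1: "1 / (real n + 1) < \<theta>" using fl th by (simp add: field_simps)
  define a where "a = 3 * n"
  define b where "b = 3 * n * n - 2 * n - 8"
  define d where "d = (5::nat)"
  have nn: "4 * n \<le> n * n" using n4 by simp
  have bb: "2 * n + 8 \<le> 3 * n * n" using nn n4 by linarith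
  have rb: "real b = 3 * real n * real n - 2 * real n - 8" unfolding b_def using bb
    by (simp add: of_nat_diff)
  have ra: "real a = 3 * real n" unfolding a_def by simp
  have rnn: "4 * real n \<le> real n * real n" using rn4 by (simp add: mult_right_mono)
  have rnnn: "4 * (real n * real n) \<le> real n * (real n * real n)" using rn4 by (simp add: mult_right_mono)
  have np: "0 < real n" using rn4 by simp
  have ge: "\<theta> \<le> x / y" if "0 < y" "y \<le> real n * x" for x y
  proof -
    have "1 / real n \<le> x / y" using that np by (simp add: field_simps)
    then show ?thesis using thn by linarith
  qed
  have lt: "\<not> \<theta> \<le> x / y" if "0 < y" "(real n + 1) * x \<le> y" for x y
  proof -
    have "x / y \<le> 1 / (real n + 1)" using that np by (simp add: field_simps)
    then show ?thesis using thn1 by linarith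
  qed
  show ?thesis
  proof (rule gen_main[of a b d])
    have bs: "2 * n + 8 < 3 * n * n" using nn n4 by linarith
    show "0 < a" "0 < b" "0 < d" using n4 bs unfolding a_def b_def d_def by auto
    show "0 < \<theta>" "\<theta> \<le> 1" using th by auto
    show "\<not> \<theta> \<le> pv0 a b d" using th by (simp add: pv0_def)
    show "\<theta> \<le> pv1 a b d" unfolding pv1_def
      by (rule ge; (simp add: ra rb d_def algebra_simps)?; (use rnn rnnn np rn4 in linarith)?)
    show "\<not> \<theta> \<le> pv2 a b d" unfolding pv2_def
      by (rule lt; (simp add: ra rb d_def algebra_simps)?; (use rnn rnnn np rn4 in linarith)?)
    show "\<not> \<theta> \<le> pv3 a b d" unfolding pv3_def
      by (rule lt; (simp add: ra rb d_def algebra_simps)?; (use rnn rnnn np rn4 in linarith)?)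
    show "\<not> \<theta> \<le> pv4 a b d" unfolding pv4_def
      by (rule lt; (simp add: ra rb d_def algebra_simps)?; (use rnn rnnn np rn4 in linarith)?)
    show "\<theta> \<le> pv5 a b d" unfolding pv5_def
      by (rule ge; (simp add: ra rb d_def algebra_simps)?; (use rnn rnnn np rn4 in linarith)?)
    show "\<theta> \<le> pv6 a b d" unfolding pv6_def
      by (rule ge; (simp add: ra rb d_def algebra_simps)?; (use rnn rnnn np rn4 in linarith)?)
    show "\<theta> \<le> pv7 a b d" unfolding pv7_def
      by (rule ge; (simp add: ra rb d_def algebra_simps)?; (use rnn rnnn np rn4 in linarith)?)
  qed
qed
theorem theorem5:
  fixes \<theta> :: real
  assumes "(0 < \<theta> \<and> \<theta> \<le> 1/4) \<or> (3/11 < \<theta> \<and> \<theta> \<le> 2/7)"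
  shows "\<exists>(V :: nat set) E. simple_graph V E \<and>
           jaccard_polish \<theta> V E \<noteq> E \<and>
           jaccard_polish \<theta> V (jaccard_polish \<theta> V E) = E"
  using assms caseA caseB by blast

end
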